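(* Let $(E\xrightarrow{Q}K,\gamma)$ be a projected cone with dual projected cone $(F\xrightarrow{P}N,\delta)$, let $\gamma_0\preceq\gamma$ be a face and $\delta_0:=\gamma_0^{*}$. Then the following are equivalent: (i) $P$ maps $\mathrm{lin}(\delta_0)\cap F$ onto $N$; (ii) $Q$ maps $\mathrm{lin}(\gamma_0)\cap E$ isomorphically onto a primitive sublattice of $K$.
   Context: Lattices are finitely generated free abelian groups, $E_{\mathbb Q}:=\mathbb Q\otimes E$; $\mathrm{lin}$ denotes linear span; a sublattice $K_0\subset K$ is primitive if $K/K_0$ is torsion free. A projected cone $(E\xrightarrow{Q}K,\gamma)$ is a surjective lattice homomorphism $Q\colon E\to K$ with a simplicial full-dimensional convex polyhedral cone $\gamma\subset E_{\mathbb Q}$. Its dual projected cone $(F\xrightarrow{P}N,\delta)$: $M:=\ker Q$, $F:=\mathrm{Hom}(E,\mathbb Z)$, $N:=\mathrm{Hom}(M,\mathbb Z)$, $P\colon F\to N$ restriction, $\delta:=\gamma^\vee$. For $\gamma_0\preceq\gamma$, $\gamma_0^*:=\gamma_0^\perp\cap\delta$. *)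

theory Defs
  imports "HOL-Analysis.Analysis"
begin

text \<open>Lattice points Z^n inside the real vector space real^'n (the ambient Q-space E_Q
  is realised inside R^n; all cones are rational, so nothing is lost).\<close>
definition lattice_pts :: "(real^'n) set" where
  "lattice_pts = {x. \<forall>i. x $ i \<in> \<int>}"

definition rational_pts :: "(real^'n) set" where
  "rational_pts = {x. \<forall>i. x $ i \<in> \<rat>}"

definition gen_cone :: "(real^'n) set \<Rightarrow> (real^'n) set" where
  "gen_cone B = {\<Sum>b\<in>B. c b *\<^sub>R b | c. \<forall>b\<in>B. 0 \<le> c b}"

definition simplicial_full_cone :: "(real^'n) set \<Rightarrow> bool" where
  "simplicial_full_cone \<gamma> \<longleftrightarrow>
     (\<exists>B. finite B \<and> independent B \<and> span B = UNIV \<and> B \<subseteq> rational_pts \<and> \<gamma> = gen_cone B)"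

text \<open>Dual cone, with F = Hom(E,Z) identified with Z^n via the standard pairing.\<close>
definition dual_cone :: "(real^'n) set \<Rightarrow> (real^'n) set" where
  "dual_cone \<gamma> = {f. \<forall>x\<in>\<gamma>. 0 \<le> f \<bullet> x}"

definition face_star :: "(real^'n) set \<Rightarrow> (real^'n) set \<Rightarrow> (real^'n) set" where
  "face_star \<gamma> \<gamma>0 = {f \<in> dual_cone \<gamma>. \<forall>x\<in>\<gamma>0. f \<bullet> x = 0}"

text \<open>A sublattice K0 of K is primitive iff K/K0 is torsion free.\<close>
definition primitive_in :: "('a::real_vector) set \<Rightarrow> 'a set \<Rightarrow> bool" where
  "primitive_in K0 K \<longleftrightarrow> K0 \<subseteq> K \<and>
     (\<forall>x\<in>K. \<forall>m::int. m \<noteq> 0 \<longrightarrow> of_int m *\<^sub>R x \<in> K0 \<longrightarrow> x \<in> K0)"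

end

theory Submission
  imports Defs
begin

lemma lat_add: "x \<in> lattice_pts \<Longrightarrow> y \<in> lattice_pts \<Longrightarrow> x + y \<in> lattice_pts"
  by (auto simp: lattice_pts_def)
lemma lat_diff: "x \<in> lattice_pts \<Longrightarrow> y \<in> lattice_pts \<Longrightarrow> x - y \<in> lattice_pts"
  by (auto simp: lattice_pts_def)
lemma lat_zero: "0 \<in> lattice_pts"
  by (auto simp: lattice_pts_def)
lemma lat_scale: "x \<in> lattice_pts \<Longrightarrow> of_int k *\<^sub>R x \<in> lattice_pts"
  by (auto simp: lattice_pts_def)
lemma lat_scale': "x \<in> lattice_pts \<Longrightarrow> k \<in> \<int> \<Longrightarrow> k *\<^sub>R x \<in> lattice_pts"
  by (auto simp: lattice_pts_def)
lemma lat_inner: "x \<in> lattice_pts \<Longrightarrow> y \<in> lattice_pts \<Longrightarrow> x \<bullet> y \<in> \<int>"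
  unfolding lattice_pts_def inner_vec_def by (auto intro!: Ints_sum Ints_mult)
lemma lat_axis: "axis i 1 \<in> lattice_pts"
  by (auto simp: lattice_pts_def axis_def)
lemma inner_axis1: "axis i 1 \<bullet> (x::real^'n) = x $ i"
  by (simp add: inner_axis')


lemma bezout_vec:
  fixes s :: "real^'n"
  assumes s: "s \<in> lattice_pts" "s \<noteq> 0"
  shows "\<exists>f\<in>lattice_pts. \<exists>g::int. g > 0 \<and> f \<bullet> s = of_int g \<and> (1 / of_int g) *\<^sub>R s \<in> lattice_pts"
proof -
  define P where "P n \<longleftrightarrow> n > 0 \<and> (\<exists>f\<in>lattice_pts. f \<bullet> s = real n)" for n :: nat
  obtain i where i: "s $ i \<noteq> 0" using s(2) vec_eq_iff[of s 0] by auto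
  have "s $ i \<in> \<int>" using s(1) by (simp add: lattice_pts_def)
  then obtain a where a: "s $ i = of_int a" by (rule Ints_cases)
  have "P (nat \<bar>a\<bar>)"
  proof (cases "a > 0")
    case True
    have "axis i 1 \<bullet> s = real (nat \<bar>a\<bar>)" using a True inner_axis1[of i s] by simp
    then show ?thesis unfolding P_def using True lat_axis[of i] by auto
  next
    case False
    with i a have "a < 0" by auto
    have "((-1) *\<^sub>R axis i 1) \<bullet> s = real (nat \<bar>a\<bar>)" using a \<open>a < 0\<close> inner_axis1[of i s] by simp
    moreover have "((-1) *\<^sub>R axis i 1) \<in> lattice_pts" using lat_scale[of "axis i 1" "-1"] lat_axis[of i] by simp
    ultimately show ?thesis unfolding P_def using \<open>a < 0\<close> by (intro conjI bexI[of _ "(-1) *\<^sub>R axis i 1"]) simp_all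
  qed
  define g where "g = (LEAST n. P n)"
  have Pg: "P g" unfolding g_def by (rule LeastI) fact
  have gmin: "\<And>n. P n \<Longrightarrow> g \<le> n" unfolding g_def by (rule Least_le)
  from Pg obtain f where f: "f \<in> lattice_pts" "f \<bullet> s = real g" and gpos: "g > 0" unfolding P_def by auto
  have dvd: "int g dvd c" if "s $ j = of_int c" for j c
  proof (rule ccontr)
    assume nd: "\<not> int g dvd c"
    define r where "r = c mod int g"
    have r: "0 < r" "r < int g" using nd gpos unfolding r_def
      by (auto simp: dvd_eq_mod_eq_0 intro: order.not_eq_order_implies_strict)
    have req: "r = c - (c div int g) * int g" unfolding r_def by (simp add: minus_div_mult_eq_mod)
    have mem: "axis j 1 - of_int (c div int g) *\<^sub>R f \<in> lattice_pts"
      by (intro lat_diff lat_axis lat_scale f)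
    have "(axis j 1 - of_int (c div int g) *\<^sub>R f) \<bullet> s = of_int r"
      using that f(2) req by (simp add: inner_diff_left inner_axis1)
    then have "P (nat r)" unfolding P_def using r mem by auto
    then have "g \<le> nat r" by (rule gmin)
    with r show False by auto
  qed
  have "(1 / of_int (int g)) *\<^sub>R s \<in> lattice_pts"
      unfolding lattice_pts_def
  proof (intro allI CollectI)
      fix j
      have "s $ j \<in> \<int>" using s(1) by (simp add: lattice_pts_def)
      then obtain c where c: "s $ j = of_int c" by (rule Ints_cases)
      from dvd[OF c] obtain e where "c = int g * e" by (auto elim: dvdE)
      then show "((1 / of_int (int g)) *\<^sub>R s) $ j \<in> \<int>" using c gpos by simp
  qed
  then show ?thesis using f gpos by (intro bexI[of _ f] exI[of _ "int g"]) auto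
qed

definition zmod :: "(real^'n) set \<Rightarrow> bool" where
  "zmod S \<longleftrightarrow> S \<subseteq> lattice_pts \<and> (\<forall>x\<in>S. \<forall>y\<in>S. \<forall>a b::int. of_int a *\<^sub>R x + of_int b *\<^sub>R y \<in> S)"

definition satur :: "(real^'n) set \<Rightarrow> bool" where
  "satur S \<longleftrightarrow> (\<forall>x\<in>lattice_pts. \<forall>m::int. m \<noteq> 0 \<longrightarrow> of_int m *\<^sub>R x \<in> S \<longrightarrow> x \<in> S)"

lemma zmod_comb: "zmod S \<Longrightarrow> x \<in> S \<Longrightarrow> y \<in> S \<Longrightarrow> of_int a *\<^sub>R x + of_int b *\<^sub>R y \<in> S"
  unfolding zmod_def by blast

lemma zmod_zero: "zmod S \<Longrightarrow> x \<in> S \<Longrightarrow> 0 \<in> S"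
  using zmod_comb[of S x x 0 0] by simp

lemma zmod_add: "zmod S \<Longrightarrow> x \<in> S \<Longrightarrow> y \<in> S \<Longrightarrow> x + y \<in> S"
  using zmod_comb[of S x y 1 1] by simp

lemma zmod_scale: "zmod S \<Longrightarrow> x \<in> S \<Longrightarrow> of_int a *\<^sub>R x \<in> S"
  using zmod_comb[of S x x a 0] by simp

lemma additive_scale:
  assumes S: "zmod S" and v: "v \<in> S"
    and add: "\<forall>x\<in>S. \<forall>y\<in>S. \<phi> (x + y) = \<phi> x + (\<phi> y :: int)"
  shows "\<phi> (of_int k *\<^sub>R v) = k * \<phi> v"
proof -
  have z: "0 \<in> S" using zmod_zero[OF S v] .
  have phi0: "\<phi> 0 = 0" using add z by (metis add.right_neutral add_cancel_right_right)
  have nat: "\<phi> (of_nat n *\<^sub>R v) = int n * \<phi> v" for n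
  proof (induction n)
    case 0 then show ?case using phi0 by simp
  next
    case (Suc n)
    have m: "of_nat n *\<^sub>R v \<in> S" using zmod_scale[OF S v, of "int n"] by simp
    have "of_nat (Suc n) *\<^sub>R v = of_nat n *\<^sub>R v + v" by (simp add: algebra_simps)
    then have "\<phi> (of_nat (Suc n) *\<^sub>R v) = \<phi> (of_nat n *\<^sub>R v) + \<phi> v" using add m v by simp
    then show ?case using Suc by (simp add: algebra_simps)
  qed
  show ?thesis
  proof (cases "k \<ge> 0")
    case True
    then obtain n where "k = int n" by (metis nonneg_int_cases)
    then show ?thesis using nat[of n] by simp
  next
    case False
    then obtain n where kn: "k = - int n" by (intro that[of "nat (-k)"]) simp
    have m1: "of_nat n *\<^sub>R v \<in> S" using zmod_scale[OF S v, of "int n"] by simp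
    have m2: "of_int k *\<^sub>R v \<in> S" using zmod_scale[OF S v] by simp
    have "of_int k *\<^sub>R v + of_nat n *\<^sub>R v = 0" using kn by (simp add: algebra_simps)
    then have "\<phi> (of_int k *\<^sub>R v) + \<phi> (of_nat n *\<^sub>R v) = 0" using add m1 m2 phi0 by metis
    then show ?thesis using nat[of n] kn by (simp add: algebra_simps)
  qed
qed

lemma extend_hom_aux:
  shows "\<forall>S::(real^'n) set. dim S = d \<longrightarrow> zmod S \<longrightarrow> satur S \<longrightarrow>
     (\<forall>\<phi>. (\<forall>x\<in>S. \<forall>y\<in>S. \<phi> (x + y) = \<phi> x + (\<phi> y :: int)) \<longrightarrow>
        (\<exists>h\<in>lattice_pts. \<forall>s\<in>S. h \<bullet> s = of_int (\<phi> s)))"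
proof (induction d rule: less_induct)
  case (less d)
  show ?case
  proof (intro allI impI)
    fix S :: "(real^'n) set" and \<phi> :: "real^'n \<Rightarrow> int"
    assume dS: "dim S = d" and S: "zmod S" and sat: "satur S"
      and add: "\<forall>x\<in>S. \<forall>y\<in>S. \<phi> (x + y) = \<phi> x + \<phi> y"
    show "\<exists>h\<in>lattice_pts. \<forall>s\<in>S. h \<bullet> s = of_int (\<phi> s)"
    proof (cases "S \<subseteq> {0}")
      case True
      have "\<phi> 0 = 0" if "0 \<in> S" using add that by (metis add.right_neutral add_cancel_right_right)
      then show ?thesis using True lat_zero by (intro bexI[of _ 0]) auto
    next
      case False
      then obtain s where s: "s \<in> S" "s \<noteq> 0" by auto
      have sL: "s \<in> lattice_pts" using S s unfolding zmod_def by auto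
      obtain f g where f: "f \<in> lattice_pts" and g: "g > 0" "f \<bullet> s = of_int g"
        and sg: "(1 / of_int g) *\<^sub>R s \<in> lattice_pts"
        using bezout_vec[OF sL s(2)] by auto
      define v where "v = (1 / of_int g) *\<^sub>R s"
      have "of_int g *\<^sub>R v = s" unfolding v_def using g by simp
      then have v: "v \<in> S" using sat sg g s unfolding satur_def v_def by (metis less_irrefl)
      have fv: "f \<bullet> v = 1" unfolding v_def using g by simp
      define S1 where "S1 = {x \<in> S. f \<bullet> x = 0}"
      have S1: "zmod S1" using S unfolding zmod_def S1_def by (auto simp: inner_add_right)
      have sat1: "satur S1" unfolding satur_def S1_def
      proof (intro ballI allI impI CollectI conjI)
        fix x m assume x: "x \<in> lattice_pts" and m: "(m::int) \<noteq> 0" and mx: "of_int m *\<^sub>R x \<in> {x \<in> S. f \<bullet> x = 0}"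
        then show "x \<in> S" using sat unfolding satur_def by blast
        show "f \<bullet> x = 0" using mx m by auto
      qed
      have sub: "span S1 \<subseteq> {x. f \<bullet> x = 0}"
        by (rule span_minimal) (auto simp: S1_def subspace_def inner_add_right)
      have "span S1 \<subset> span S"
      proof
        show "span S1 \<subseteq> span S" by (rule span_mono) (auto simp: S1_def)
        show "span S1 \<noteq> span S" using sub fv v span_base[of v S] by auto
      qed
      then have "dim S1 < d" using dS dim_psubset by blast
      moreover have add1: "\<forall>x\<in>S1. \<forall>y\<in>S1. \<phi> (x + y) = \<phi> x + \<phi> y" using add unfolding S1_def by auto
      ultimately obtain h1 where h1: "h1 \<in> lattice_pts" "\<forall>s\<in>S1. h1 \<bullet> s = of_int (\<phi> s)"
        using less.IH[of "dim S1"] S1 sat1 by blast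
      have vL: "v \<in> lattice_pts" using sg unfolding v_def .
      obtain c where c: "of_int c = of_int (\<phi> v) - h1 \<bullet> v"
        using lat_inner[OF h1(1) vL] by (metis Ints_cases Ints_diff Ints_of_int)
      define h where "h = h1 + of_int c *\<^sub>R f"
      have hL: "h \<in> lattice_pts" unfolding h_def by (intro lat_add h1 lat_scale f)
      have hv: "h \<bullet> v = of_int (\<phi> v)" unfolding h_def using c fv by (simp add: inner_add_left)
      show ?thesis
      proof (intro bexI[OF _ hL] ballI)
        fix x assume x: "x \<in> S"
        have xL: "x \<in> lattice_pts" using x S unfolding zmod_def by auto
        obtain k where k: "of_int k = f \<bullet> x" using lat_inner[OF f xL] by (metis Ints_cases)
        define x1 where "x1 = x - of_int k *\<^sub>R v"
        have "x1 = of_int 1 *\<^sub>R x + of_int (-k) *\<^sub>R v" unfolding x1_def by simp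
        then have x1S: "x1 \<in> S" using zmod_comb[OF S x v] by metis
        have "f \<bullet> x1 = 0" unfolding x1_def using k fv by (simp add: inner_diff_right)
        then have x1S1: "x1 \<in> S1" using x1S unfolding S1_def by auto
        have kvS: "of_int k *\<^sub>R v \<in> S" using zmod_scale[OF S v] .
        have xe: "x = of_int k *\<^sub>R v + x1" unfolding x1_def by simp
        have "\<phi> x = \<phi> (of_int k *\<^sub>R v) + \<phi> x1" using add kvS x1S xe by metis
        also have "\<phi> (of_int k *\<^sub>R v) = k * \<phi> v" using additive_scale[OF S v add] .
        finally have px: "\<phi> x = k * \<phi> v + \<phi> x1" .
        have "h \<bullet> x1 = h1 \<bullet> x1" unfolding h_def using \<open>f \<bullet> x1 = 0\<close> by (simp add: inner_add_left)
        also have "\<dots> = of_int (\<phi> x1)" using h1(2) x1S1 by blast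
        finally have hx1: "h \<bullet> x1 = of_int (\<phi> x1)" .
        have "h \<bullet> x = of_int k * (h \<bullet> v) + h \<bullet> x1" using xe by (metis inner_add_right inner_scaleR_right)
        then show "h \<bullet> x = of_int (\<phi> x)" using hv hx1 px by simp
      qed
    qed
  qed
qed

lemma extend_hom:
  fixes S :: "(real^'n) set"
  assumes "zmod S" "satur S" "\<forall>x\<in>S. \<forall>y\<in>S. \<phi> (x + y) = \<phi> x + (\<phi> y :: int)"
  shows "\<exists>h\<in>lattice_pts. \<forall>s\<in>S. h \<bullet> s = of_int (\<phi> s)"
  using extend_hom_aux[of "dim S"] assms by blast


lemma rat_scale:
  fixes x :: "real^'n"
  assumes "x \<in> rational_pts"
  shows "\<exists>k::int. k > 0 \<and> of_int k *\<^sub>R x \<in> lattice_pts"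
proof -
  have "\<forall>i. \<exists>d::int. d > 0 \<and> of_int d * x $ i \<in> \<int>"
  proof
    fix i
    have "x $ i \<in> \<rat>" using assms by (simp add: rational_pts_def)
    then obtain p q where pq: "q > 0" "x $ i = of_int p / of_int q" by (rule Rats_cases')
    show "\<exists>d::int. d > 0 \<and> of_int d * x $ i \<in> \<int>"
      using pq by (intro exI[of _ q]) simp
  qed
  then obtain d where d: "\<And>i. d i > (0::int)" "\<And>i. of_int (d i) * x $ i \<in> \<int>" by metis
  define k where "k = prod d UNIV"
  have "k > 0" unfolding k_def using d(1) by (simp add: prod_pos)
  moreover have "of_int k *\<^sub>R x \<in> lattice_pts"
    unfolding lattice_pts_def
  proof (intro CollectI allI)
    fix i
    have "k = d i * prod d (UNIV - {i})" unfolding k_def by (simp add: prod.remove)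
    then have "of_int k * x $ i = of_int (prod d (UNIV - {i})) * (of_int (d i) * x $ i)" by simp
    also have "\<dots> \<in> \<int>" using d(2)[of i] by (rule Ints_mult[OF Ints_of_int])
    finally show "(of_int k *\<^sub>R x) $ i \<in> \<int>" by simp
  qed
  ultimately show ?thesis by blast
qed

lemma gen_cone_mem: "finite B \<Longrightarrow> (x \<in> gen_cone B) \<longleftrightarrow> (\<exists>c. (\<forall>b\<in>B. 0 \<le> c b) \<and> x = (\<Sum>b\<in>B. c b *\<^sub>R b))"
  unfolding gen_cone_def by auto

lemma gen_cone_scale: "finite B \<Longrightarrow> x \<in> gen_cone B \<Longrightarrow> 0 \<le> t \<Longrightarrow> t *\<^sub>R x \<in> gen_cone B"
proof -
  assume fB: "finite B" and x: "x \<in> gen_cone B" and t: "0 \<le> t"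
  then obtain c where c: "\<forall>b\<in>B. 0 \<le> c b" "x = (\<Sum>b\<in>B. c b *\<^sub>R b)" using gen_cone_mem by blast
  have "t *\<^sub>R x = (\<Sum>b\<in>B. (t * c b) *\<^sub>R b)" using c(2) by (simp add: scaleR_sum_right)
  then show ?thesis unfolding gen_cone_mem[OF fB] using c(1) t by (intro exI[of _ "\<lambda>b. t * c b"]) auto
qed

lemma face_cone_facts:
  assumes fB: "finite B" and face: "F face_of gen_cone B" and ne: "F \<noteq> {}"
  shows "0 \<in> F" and "\<And>x t. x \<in> F \<Longrightarrow> 0 \<le> t \<Longrightarrow> t *\<^sub>R x \<in> F"
proof -
  have conv: "convex F" using face by (rule face_of_imp_convex)
  have sub: "F \<subseteq> gen_cone B" using face by (rule face_of_imp_subset)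
  have key: "\<And>a b x. a \<in> gen_cone B \<Longrightarrow> b \<in> gen_cone B \<Longrightarrow> x \<in> F \<Longrightarrow> x \<in> open_segment a b \<Longrightarrow> a \<in> F \<and> b \<in> F"
    using face unfolding face_of_def by blast
  have z: "0 \<in> F" if "x \<in> F" for x
  proof (cases "x = 0")
    case True then show ?thesis using that by simp
  next
    case False
    have "x \<in> open_segment 0 (2 *\<^sub>R x)" using False
      by (simp add: in_segment) (intro exI[of _ "1/2"], simp)
    moreover have "0 \<in> gen_cone B" using gen_cone_scale[OF fB, of x 0] sub that by auto
    moreover have "2 *\<^sub>R x \<in> gen_cone B" using gen_cone_scale[OF fB, of x 2] sub that by auto
    ultimately show ?thesis using key that by blast
  qed
  from ne obtain x0 where "x0 \<in> F" by auto
  then show z0: "0 \<in> F" using z by blast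
  fix x and t :: real assume x: "x \<in> F" and t: "0 \<le> t"
  show "t *\<^sub>R x \<in> F"
  proof (cases "t \<le> 1")
    case True
    have "t *\<^sub>R x = (1 - t) *\<^sub>R 0 + t *\<^sub>R x" by simp
    then show ?thesis using conv z0 x t True by (metis convexD_alt)
  next
    case False
    show ?thesis
    proof (cases "x = 0")
      case True then show ?thesis using z0 by simp
    next
      case xn: False
      have "x \<in> open_segment 0 (t *\<^sub>R x)" using False xn
        by (simp add: in_segment) (intro exI[of _ "1/t"], auto)
      moreover have "0 \<in> gen_cone B" using z0 sub by auto
      moreover have "t *\<^sub>R x \<in> gen_cone B" using gen_cone_scale[OF fB, of x t] sub x t by auto
      ultimately show ?thesis using key x by blast
    qed
  qed
qed

lemma face_coeff:
  assumes fB: "finite B" and face: "F face_of gen_cone B" and ne: "F \<noteq> {}"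
    and c: "\<forall>b\<in>B. 0 \<le> c b" and x: "x = (\<Sum>b\<in>B. c b *\<^sub>R b)" "x \<in> F"
    and b: "b \<in> B" "c b > 0"
  shows "b \<in> F"
proof -
  have sub: "F \<subseteq> gen_cone B" using face by (rule face_of_imp_subset)
  have key: "\<And>a b x. a \<in> gen_cone B \<Longrightarrow> b \<in> gen_cone B \<Longrightarrow> x \<in> F \<Longrightarrow> x \<in> open_segment a b \<Longrightarrow> a \<in> F \<and> b \<in> F"
    using face unfolding face_of_def by blast
  note fc = face_cone_facts[OF fB face ne]
  define u where "u = c b *\<^sub>R b"
  define v where "v = (\<Sum>b'\<in>B. (if b' = b then 0 else c b') *\<^sub>R b')"
  have "v = (if b = b then 0 else c b) *\<^sub>R b + (\<Sum>b'\<in>B-{b}. (if b' = b then 0 else c b') *\<^sub>R b')"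
    unfolding v_def by (rule sum.remove[OF fB b(1)])
  also have "\<dots> = (\<Sum>b'\<in>B-{b}. c b' *\<^sub>R b')" by (auto intro: sum.cong)
  finally have v': "v = (\<Sum>b'\<in>B-{b}. c b' *\<^sub>R b')" .
  have "x = c b *\<^sub>R b + (\<Sum>b'\<in>B-{b}. c b' *\<^sub>R b')"
    unfolding x by (rule sum.remove[OF fB b(1)])
  then have xuv: "x = u + v" unfolding u_def v' .
  have u2: "2 *\<^sub>R u \<in> gen_cone B"
  proof -
    have "2 *\<^sub>R u = (\<Sum>b'\<in>B. (if b' = b then 2 * c b else 0) *\<^sub>R b')"
    proof -
      have "(\<Sum>b'\<in>B. (if b' = b then 2 * c b else 0) *\<^sub>R b') = (\<Sum>b'\<in>B. if b' = b then (2 * c b) *\<^sub>R b' else 0)"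
        by (rule sum.cong) auto
      also have "\<dots> = (2 * c b) *\<^sub>R b" using fB b(1) by (simp add: sum.delta)
      finally show ?thesis unfolding u_def by simp
    qed
    then show ?thesis unfolding gen_cone_mem[OF fB] using c b by (intro exI[of _ "\<lambda>b'. if b' = b then 2 * c b else 0"]) auto
  qed
  have v2: "2 *\<^sub>R v \<in> gen_cone B"
  proof -
    have "2 *\<^sub>R v = (\<Sum>b'\<in>B. (2 * (if b' = b then 0 else c b')) *\<^sub>R b')"
      unfolding v_def by (simp add: scaleR_sum_right)
    then show ?thesis unfolding gen_cone_mem[OF fB] using c by (intro exI[of _ "\<lambda>b'. 2 * (if b' = b then 0 else c b')"]) auto
  qed
  have "2 *\<^sub>R u \<in> F"
  proof (cases "2 *\<^sub>R u = 2 *\<^sub>R v")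
    case True
    then have "u = v" by simp
    then have "x = 2 *\<^sub>R u" using xuv by (simp add: scaleR_2)
    then have "u = (1/2) *\<^sub>R x" by simp
    then show ?thesis using fc(2)[OF x(2), of 1] by simp
  next
    case False
    have "x \<in> open_segment (2 *\<^sub>R u) (2 *\<^sub>R v)" using False xuv
      by (simp add: in_segment) (intro exI[of _ "1/2"], simp add: algebra_simps)
    then show ?thesis using key u2 v2 x(2) by blast
  qed
  then have "(1 / (2 * c b)) *\<^sub>R (2 *\<^sub>R u) \<in> F" using fc(2) b(2) by (metis divide_nonneg_nonneg less_eq_real_def mult_nonneg_nonneg zero_le_numeral zero_le_one)
  then show ?thesis unfolding u_def using b(2) by simp
qed


lemma dual_vec:
  fixes B :: "(real^'n) set"
  assumes fB: "finite B" and iB: "independent B" and b: "b \<in> B"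
  shows "\<exists>w. \<forall>c. w \<bullet> (\<Sum>b'\<in>B. c b' *\<^sub>R b') = c b"
proof -
  have "\<exists>g :: real^'n \<Rightarrow> real. linear g \<and> (\<forall>x\<in>B. g x = (if x = b then 1 else 0))"
    using linear_independent_extend[OF iB, of "\<lambda>x. if x = b then 1 else 0"] by simp
  then obtain g :: "real^'n \<Rightarrow> real" where g: "linear g" "\<forall>x\<in>B. g x = (if x = b then 1 else 0)"
    by blast
  define w where "w = adjoint g 1"
  have wg: "w \<bullet> x = g x" for x
    using adjoint_works[OF g(1), of x 1] unfolding w_def by (simp add: inner_commute)
  show ?thesis
  proof (intro exI allI)
    fix c :: "real^'n \<Rightarrow> real"
    have "w \<bullet> (\<Sum>b'\<in>B. c b' *\<^sub>R b') = (\<Sum>b'\<in>B. c b' * g b')"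
      unfolding wg using g(1) by (simp add: linear_sum linear_scale)
    also have "\<dots> = (\<Sum>b'\<in>B. if b' = b then c b else 0)"
      using g(2) by (intro sum.cong) auto
    also have "\<dots> = c b" using fB b by simp
    finally show "w \<bullet> (\<Sum>b'\<in>B. c b' *\<^sub>R b') = c b" .
  qed
qed

lemma span_orth:
  assumes "\<forall>d\<in>D. \<forall>x\<in>G. d \<bullet> x = (0::real)"
  shows "\<forall>f\<in>span D. \<forall>l\<in>span G. f \<bullet> l = 0"
proof -
  have 1: "\<forall>d\<in>D. \<forall>l\<in>span G. d \<bullet> l = 0"
  proof
    fix d assume d: "d \<in> D"
    have "span G \<subseteq> {l. d \<bullet> l = 0}"
      by (rule span_minimal) (use assms d in \<open>auto simp: subspace_def inner_add_right\<close>)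
    then show "\<forall>l\<in>span G. d \<bullet> l = 0" by auto
  qed
  have "span D \<subseteq> {f. \<forall>l\<in>span G. f \<bullet> l = 0}"
    by (rule span_minimal) (use 1 in \<open>auto simp: subspace_def inner_add_left\<close>)
  then show ?thesis by auto
qed

lemma geom_F2:
  fixes B :: "(real^'n) set"
  assumes fB: "finite B" and iB: "independent B" and sB: "span B = UNIV"
    and face: "\<gamma>0 face_of gen_cone B" and ne: "\<gamma>0 \<noteq> {}"
    and f: "\<forall>b\<in>B \<inter> \<gamma>0. f \<bullet> b = 0"
  shows "f \<in> span (face_star (gen_cone B) \<gamma>0)"
proof -
  have "\<forall>b\<in>B. \<exists>w. \<forall>c. w \<bullet> (\<Sum>b'\<in>B. c b' *\<^sub>R b') = c b"
    using dual_vec[OF fB iB] by blast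
  from bchoice[OF this] obtain w where w0: "\<forall>b\<in>B. \<forall>c. w b \<bullet> (\<Sum>b'\<in>B. c b' *\<^sub>R b') = c b" by blast
  have w: "\<And>b c. b \<in> B \<Longrightarrow> w b \<bullet> (\<Sum>b'\<in>B. c b' *\<^sub>R b') = c b" using w0 by blast
  have sub: "\<gamma>0 \<subseteq> gen_cone B" using face by (rule face_of_imp_subset)
  have wstar: "w b \<in> face_star (gen_cone B) \<gamma>0" if b: "b \<in> B" "b \<notin> \<gamma>0" for b
    unfolding face_star_def dual_cone_def
  proof (intro CollectI conjI ballI)
    fix x assume "x \<in> gen_cone B"
    then obtain c where c: "\<forall>b\<in>B. 0 \<le> c b" "x = (\<Sum>b\<in>B. c b *\<^sub>R b)" using gen_cone_mem[OF fB] by blast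
    show "0 \<le> w b \<bullet> x" using w[OF b(1), of c] c b by simp
  next
    fix x assume x: "x \<in> \<gamma>0"
    then obtain c where c: "\<forall>b\<in>B. 0 \<le> c b" "x = (\<Sum>b\<in>B. c b *\<^sub>R b)" using sub gen_cone_mem[OF fB] by blast
    have "\<not> c b > 0" using face_coeff[OF fB face ne c(1) c(2) x b(1)] b(2) by blast
    then have "c b = 0" using c(1) b(1) by force
    then show "w b \<bullet> x = 0" using w[OF b(1), of c] c by simp
  qed
  define g where "g = (\<Sum>b\<in>B. (f \<bullet> b) *\<^sub>R w b)"
  have "g = f"
  proof -
    have "g \<bullet> z = f \<bullet> z" for z
    proof -
      have "z \<in> span B" using sB by simp
      then obtain c where c: "z = (\<Sum>b\<in>B. c b *\<^sub>R b)" using span_finite[OF fB] by auto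
      have "g \<bullet> z = (\<Sum>b\<in>B. (f \<bullet> b) * (w b \<bullet> z))" unfolding g_def by (simp add: inner_sum_left)
      also have "\<dots> = (\<Sum>b\<in>B. (f \<bullet> b) * c b)" using w c by (intro sum.cong) auto
      also have "\<dots> = f \<bullet> z" unfolding c by (simp add: inner_sum_right mult.commute)
      finally show ?thesis .
    qed
    then show ?thesis using vector_eq_rdot[of g f] by blast
  qed
  moreover have "g \<in> span (face_star (gen_cone B) \<gamma>0)"
    unfolding g_def
  proof (rule span_sum)
    fix b assume b: "b \<in> B"
    show "(f \<bullet> b) *\<^sub>R w b \<in> span (face_star (gen_cone B) \<gamma>0)"
    proof (cases "b \<in> \<gamma>0")
      case True then show ?thesis using f b by (simp add: span_zero)
    next
      case False then show ?thesis using wstar[OF b False] by (intro span_mul span_base)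
    qed
  qed
  ultimately show ?thesis by simp
qed


lemma floor_lat: "x \<in> lattice_pts \<Longrightarrow> of_int \<lfloor>x $ i\<rfloor> = x $ i"
  unfolding lattice_pts_def by (metis Ints_cases floor_of_int mem_Collect_eq)

theorem lemma3p7:
  fixes Q :: "real^'n \<Rightarrow> real^'k" and \<gamma> \<gamma>0 :: "(real^'n) set"
  assumes Qlin: "linear Q"
    and Qint: "\<forall>x\<in>lattice_pts. Q x \<in> lattice_pts"
    and cone: "simplicial_full_cone \<gamma>"
    and face: "\<gamma>0 face_of \<gamma>" and ne: "\<gamma>0 \<noteq> {}"
  defines "K \<equiv> Q ` lattice_pts"
    and "M \<equiv> {x \<in> lattice_pts. Q x = 0}"
    and "\<delta>0 \<equiv> face_star \<gamma> \<gamma>0"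
  shows "(\<forall>\<phi> :: real^'n \<Rightarrow> int.
            (\<forall>x\<in>M. \<forall>y\<in>M. \<phi> (x + y) = \<phi> x + \<phi> y) \<longrightarrow>
            (\<exists>f\<in>span \<delta>0 \<inter> lattice_pts. \<forall>x\<in>M. f \<bullet> x = of_int (\<phi> x)))
    \<longleftrightarrow> (inj_on Q (span \<gamma>0 \<inter> lattice_pts) \<and>
         primitive_in (Q ` (span \<gamma>0 \<inter> lattice_pts)) K)"
proof -
  obtain B where B: "finite B" "independent B" "span B = UNIV" "B \<subseteq> rational_pts" "\<gamma> = gen_cone B"
    using cone unfolding simplicial_full_cone_def by blast
  define L where "L = span \<gamma>0 \<inter> lattice_pts"
  have F1: "\<forall>f\<in>span \<delta>0. \<forall>l\<in>span \<gamma>0. f \<bullet> l = 0"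
    by (rule span_orth) (auto simp: \<delta>0_def face_star_def)
  have F2: "f \<in> span \<delta>0" if f: "f \<in> lattice_pts" "\<forall>l\<in>L. f \<bullet> l = 0" for f
  proof -
    have "\<forall>b\<in>B \<inter> \<gamma>0. f \<bullet> b = 0"
    proof
      fix b assume b: "b \<in> B \<inter> \<gamma>0"
      obtain k :: int where k: "k > 0" "of_int k *\<^sub>R b \<in> lattice_pts" using rat_scale[of b] b B(4) by blast
      have "of_int k *\<^sub>R b \<in> span \<gamma>0" using b by (intro span_mul span_base) auto
      then have "f \<bullet> (of_int k *\<^sub>R b) = 0" using f k unfolding L_def by blast
      then show "f \<bullet> b = 0" using k by simp
    qed
    then show ?thesis using geom_F2[OF B(1-3), of \<gamma>0 f] face ne B(5) unfolding \<delta>0_def by simp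
  qed
  have Qadd: "Q (x + y) = Q x + Q y" for x y using Qlin by (rule linear_add)
  have Qdiff: "Q (x - y) = Q x - Q y" for x y using Qlin by (rule linear_diff)
  have Qscale: "Q (c *\<^sub>R x) = c *\<^sub>R Q x" for c x using Qlin by (rule linear_scale)
  have Q0: "Q 0 = 0" using Qlin by (rule linear_0)
  have Lsub: "L \<subseteq> lattice_pts" unfolding L_def by auto
  have Mzmod: "zmod M" unfolding zmod_def M_def
    by (auto intro!: lat_add lat_scale simp: Qadd Qscale)
  have Lzmod: "zmod L" unfolding zmod_def L_def
    by (auto intro!: lat_add lat_scale span_add span_mul)
  show ?thesis
  proof
    assume H: "\<forall>\<phi> :: real^'n \<Rightarrow> int.
            (\<forall>x\<in>M. \<forall>y\<in>M. \<phi> (x + y) = \<phi> x + \<phi> y) \<longrightarrow>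
            (\<exists>f\<in>span \<delta>0 \<inter> lattice_pts. \<forall>x\<in>M. f \<bullet> x = of_int (\<phi> x))"
    have cH: "\<exists>f\<in>span \<delta>0 \<inter> lattice_pts. \<forall>x\<in>M. f \<bullet> x = x $ i" for i
    proof -
      have "\<forall>x\<in>M. \<forall>y\<in>M. \<lfloor>(x + y) $ i\<rfloor> = \<lfloor>x $ i\<rfloor> + \<lfloor>y $ i\<rfloor>"
      proof (intro ballI)
        fix x y assume "x \<in> M" "y \<in> M"
        then have xy: "x \<in> lattice_pts" "y \<in> lattice_pts" unfolding M_def by auto
        have "x $ i \<in> \<int>" "y $ i \<in> \<int>" using xy by (simp_all add: lattice_pts_def)
        then obtain a b where a: "x $ i = of_int a" and b: "y $ i = of_int b" by (metis Ints_cases)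
        show "\<lfloor>(x + y) $ i\<rfloor> = \<lfloor>x $ i\<rfloor> + \<lfloor>y $ i\<rfloor>" using a b by simp
      qed
      then obtain f where f: "f \<in> span \<delta>0 \<inter> lattice_pts" "\<forall>x\<in>M. f \<bullet> x = of_int \<lfloor>x $ i\<rfloor>"
        using H[rule_format, of "\<lambda>x. \<lfloor>x $ i\<rfloor>"] by blast
      show ?thesis using f floor_lat unfolding M_def by (intro bexI[OF _ f(1)]) auto
    qed
    have inj: "inj_on Q L"
    proof (rule inj_onI)
      fix x y assume x: "x \<in> L" and y: "y \<in> L" and eq: "Q x = Q y"
      define z where "z = x - y"
      have zM: "z \<in> M" unfolding M_def z_def using x y eq Lsub by (auto intro: lat_diff simp: Qdiff)
      have zs: "z \<in> span \<gamma>0" unfolding z_def using x y unfolding L_def by (auto intro: span_diff)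
      have "z $ i = 0" for i
      proof -
        obtain f where f: "f \<in> span \<delta>0" "\<forall>x\<in>M. f \<bullet> x = x $ i" using cH[of i] by blast
        have "f \<bullet> z = 0" using F1 f(1) zs by blast
        then show ?thesis using f(2) zM by simp
      qed
      then have "z = 0" by (simp add: vec_eq_iff)
      then show "x = y" unfolding z_def by simp
    qed
    have prim: "primitive_in (Q ` L) K"
      unfolding primitive_in_def
    proof (intro conjI ballI allI impI)
      show "Q ` L \<subseteq> K" unfolding K_def using Lsub by auto
      fix k and m :: int assume k: "k \<in> K" and m: "m \<noteq> 0" and mk: "of_int m *\<^sub>R k \<in> Q ` L"
      obtain x where x: "x \<in> lattice_pts" "k = Q x" using k unfolding K_def by auto
      obtain l where l: "l \<in> L" "of_int m *\<^sub>R k = Q l" using mk by auto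
      define y where "y = of_int m *\<^sub>R x - l"
      have yM: "y \<in> M" unfolding M_def y_def using x l Lsub
        by (auto intro!: lat_diff lat_scale simp: Qdiff Qscale)
      have ydiv: "y $ i / of_int m \<in> \<int>" for i
      proof -
        obtain f where f: "f \<in> span \<delta>0" "f \<in> lattice_pts" "\<forall>x\<in>M. f \<bullet> x = x $ i" using cH[of i] by blast
        have fl: "f \<bullet> l = 0" using F1 f(1) l(1) unfolding L_def by blast
        have "y $ i = f \<bullet> y" using f(3) yM by simp
        also have "\<dots> = of_int m * (f \<bullet> x)" unfolding y_def using fl by (simp add: inner_diff_right)
        finally have "y $ i / of_int m = f \<bullet> x" using m by simp
        then show ?thesis using lat_inner[OF f(2) x(1)] by simp
      qed
      define y' where "y' = (1 / of_int m) *\<^sub>R y"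
      have y'L: "y' \<in> lattice_pts" unfolding lattice_pts_def y'_def using ydiv by (simp add: divide_inverse mult.commute)
      have y'M: "y' \<in> M" using y'L yM unfolding M_def y'_def by (simp add: Qscale)
      have xy': "x - y' = (1 / of_int m) *\<^sub>R l" unfolding y'_def y_def using m by (simp add: algebra_simps)
      have "x - y' \<in> L" unfolding L_def using xy' l(1) lat_diff[OF x(1) y'L] unfolding L_def
        by (auto intro: span_mul)
      moreover have "Q (x - y') = Q x" using y'M unfolding M_def by (simp add: Qdiff)
      ultimately show "k \<in> Q ` L" using x(2) by (metis image_eqI)
    qed
    show "inj_on Q (span \<gamma>0 \<inter> lattice_pts) \<and> primitive_in (Q ` (span \<gamma>0 \<inter> lattice_pts)) K"
      using inj prim unfolding L_def by simp
  next
    assume "inj_on Q (span \<gamma>0 \<inter> lattice_pts) \<and> primitive_in (Q ` (span \<gamma>0 \<inter> lattice_pts)) K"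
    then have inj: "inj_on Q L" and prim: "primitive_in (Q ` L) K" unfolding L_def by auto
    show "\<forall>\<phi> :: real^'n \<Rightarrow> int.
            (\<forall>x\<in>M. \<forall>y\<in>M. \<phi> (x + y) = \<phi> x + \<phi> y) \<longrightarrow>
            (\<exists>f\<in>span \<delta>0 \<inter> lattice_pts. \<forall>x\<in>M. f \<bullet> x = of_int (\<phi> x))"
    proof (intro allI impI)
      fix \<phi> :: "real^'n \<Rightarrow> int"
      assume add: "\<forall>x\<in>M. \<forall>y\<in>M. \<phi> (x + y) = \<phi> x + \<phi> y"
      have zM: "0 \<in> M" unfolding M_def using lat_zero Q0 by simp
      have zL: "0 \<in> L" unfolding L_def using lat_zero span_0 by blast
      have phi0: "\<phi> 0 = 0" using add zM by (metis add.right_neutral add_cancel_right_right)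
      define S where "S = {l + y | l y. l \<in> L \<and> y \<in> M}"
      have Szmod: "zmod S" unfolding zmod_def
      proof (intro conjI ballI allI)
        show "S \<subseteq> lattice_pts" unfolding S_def using Lsub M_def by (auto intro: lat_add)
        fix x y and a b :: int assume "x \<in> S" "y \<in> S"
        then obtain l1 y1 l2 y2 where e: "x = l1 + y1" "y = l2 + y2" "l1 \<in> L" "l2 \<in> L" "y1 \<in> M" "y2 \<in> M"
          unfolding S_def by auto
        have "of_int a *\<^sub>R x + of_int b *\<^sub>R y = (of_int a *\<^sub>R l1 + of_int b *\<^sub>R l2) + (of_int a *\<^sub>R y1 + of_int b *\<^sub>R y2)"
          unfolding e by (simp add: algebra_simps)
        moreover have "of_int a *\<^sub>R l1 + of_int b *\<^sub>R l2 \<in> L" using zmod_comb[OF Lzmod e(3,4)] .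
        moreover have "of_int a *\<^sub>R y1 + of_int b *\<^sub>R y2 \<in> M" using zmod_comb[OF Mzmod e(5,6)] .
        ultimately show "of_int a *\<^sub>R x + of_int b *\<^sub>R y \<in> S" unfolding S_def by blast
      qed
      have Ssat: "satur S" unfolding satur_def
      proof (intro ballI allI impI)
        fix x and m :: int assume x: "x \<in> lattice_pts" and m: "m \<noteq> 0" and mx: "of_int m *\<^sub>R x \<in> S"
        then obtain l y where e: "of_int m *\<^sub>R x = l + y" "l \<in> L" "y \<in> M" unfolding S_def by auto
        have Qy: "Q y = 0" using e(3) unfolding M_def by simp
        have "of_int m *\<^sub>R Q x = Q l" using arg_cong[OF e(1), of Q] Qy by (simp add: Qadd Qscale)
        then have "of_int m *\<^sub>R Q x \<in> Q ` L" using e(2) by auto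
        moreover have "Q x \<in> K" unfolding K_def using x by auto
        ultimately have "Q x \<in> Q ` L" using prim m unfolding primitive_in_def by blast
        then obtain l' where l': "l' \<in> L" "Q x = Q l'" by auto
        have "x - l' \<in> M" unfolding M_def using x l' Lsub by (auto intro: lat_diff simp: Qdiff)
        moreover have "x = l' + (x - l')" by simp
        ultimately show "x \<in> S" unfolding S_def using l'(1) by blast
      qed
      define \<psi> where "\<psi> s = \<phi> (SOME y. y \<in> M \<and> s - y \<in> L)" for s
      have uniq: "y1 = y2" if "y1 \<in> M" "y2 \<in> M" "s - y1 \<in> L" "s - y2 \<in> L" for s y1 y2
      proof -
        have "Q (s - y1) = Q (s - y2)" using that unfolding M_def by (simp add: Qdiff)
        then have "s - y1 = s - y2" using inj that by (meson inj_onD)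
        then show ?thesis by simp
      qed
      have psi: "\<psi> (l + y) = \<phi> y" if "l \<in> L" "y \<in> M" for l y
      proof -
        have ex: "y \<in> M \<and> (l + y) - y \<in> L" using that by simp
        have "(SOME y'. y' \<in> M \<and> (l + y) - y' \<in> L) \<in> M \<and> (l + y) - (SOME y'. y' \<in> M \<and> (l + y) - y' \<in> L) \<in> L"
          by (rule someI[of "\<lambda>y'. y' \<in> M \<and> (l + y) - y' \<in> L", OF ex])
        then have "(SOME y'. y' \<in> M \<and> (l + y) - y' \<in> L) = y" using uniq ex by blast
        then show ?thesis unfolding \<psi>_def by simp
      qed
      have psiadd: "\<forall>x\<in>S. \<forall>y\<in>S. \<psi> (x + y) = \<psi> x + \<psi> y"
      proof (intro ballI)
        fix x y assume "x \<in> S" "y \<in> S"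
        then obtain l1 y1 l2 y2 where e: "x = l1 + y1" "y = l2 + y2" "l1 \<in> L" "l2 \<in> L" "y1 \<in> M" "y2 \<in> M"
          unfolding S_def by auto
        have "x + y = (l1 + l2) + (y1 + y2)" unfolding e by (simp add: algebra_simps)
        moreover have "l1 + l2 \<in> L" using zmod_add[OF Lzmod e(3,4)] .
        moreover have "y1 + y2 \<in> M" using zmod_add[OF Mzmod e(5,6)] .
        ultimately have "\<psi> (x + y) = \<phi> (y1 + y2)" using psi by simp
        also have "\<dots> = \<psi> x + \<psi> y" using add e psi by simp
        finally show "\<psi> (x + y) = \<psi> x + \<psi> y" .
      qed
      obtain h where h: "h \<in> lattice_pts" "\<forall>s\<in>S. h \<bullet> s = of_int (\<psi> s)"
        using extend_hom[OF Szmod Ssat psiadd] by blast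
      have hL: "\<forall>l\<in>L. h \<bullet> l = 0"
      proof
        fix l assume l: "l \<in> L"
        have "l + 0 \<in> S" unfolding S_def using l zM by blast
        then have "h \<bullet> (l + 0) = of_int (\<psi> (l + 0))" using h(2) by blast
        then show "h \<bullet> l = 0" using psi[OF l zM] phi0 by simp
      qed
      have hM: "\<forall>x\<in>M. h \<bullet> x = of_int (\<phi> x)"
      proof
        fix y assume y: "y \<in> M"
        have "0 + y \<in> S" unfolding S_def using y zL by blast
        then have "h \<bullet> (0 + y) = of_int (\<psi> (0 + y))" using h(2) by blast
        then show "h \<bullet> y = of_int (\<phi> y)" using psi[OF zL y] by simp
      qed
      show "\<exists>f\<in>span \<delta>0 \<inter> lattice_pts. \<forall>x\<in>M. f \<bullet> x = of_int (\<phi> x)"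
        using F2[OF h(1) hL] h(1) hM by blast
    qed
  qed
qed

end
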